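(* Let $G=\mathrm{SL}_3(\mathbb{R})$, $U=U_3(\mathbb{R})$, $\Gamma=\mathrm{SL}_3(\mathbb{Z})$ acting on $G/U$ by left multiplication. Then: (1) if $g\in P_+$, the stabilizer of $gU$ in $\Gamma$ is $H_3(\mathbb{Z})$; (2) if $g\in P_{i,+}\setminus\Gamma P$ for $i\in\{1,2\}$, the stabilizer of $gU$ is $\Gamma_i$; (3) if $g\in G\setminus(\Gamma P_1\cup\Gamma P_2)$, the stabilizer of $gU$ is trivial.
   Context: $U_3(\mathbb{R})$: unipotent upper triangular matrices. $P$: upper triangular matrices in $G$; $P_+\subset P$: those with positive diagonal entries. $P_1$: matrices in $G$ with $g_{31}=g_{32}=0$; $P_{1,+}\subset P_1$: those with $g_{33}>0$. $P_2$: matrices in $G$ with $g_{21}=g_{31}=0$; $P_{2,+}\subset P_2$: those with $g_{11}>0$. $H_3(\mathbb{Z})=\Gamma\cap U$ (integer unipotent upper triangular matrices); $\Gamma_1=\{I+aE_{13}+bE_{23}: a,b\in\mathbb{Z}\}$; $\Gamma_2=\{I+aE_{12}+bE_{13}: a,b\in\mathbb{Z}\}$, with $E_{ij}$ matrix units. *)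

theory Defs
  imports "HOL-Analysis.Analysis"
begin

type_synonym mat3 = "real^3^3"

definition SL3R :: "mat3 set" where
  "SL3R = {A. det A = 1}"

definition SL3Z :: "mat3 set" where
  "SL3Z = {A \<in> SL3R. \<forall>i j. A $ i $ j \<in> \<int>}"

definition U3 :: "mat3 set" where
  "U3 = {A. A$1$1 = 1 \<and> A$2$2 = 1 \<and> A$3$3 = 1 \<and>
            A$2$1 = 0 \<and> A$3$1 = 0 \<and> A$3$2 = 0}"

definition Pb :: "mat3 set" where
  "Pb = {A \<in> SL3R. A$2$1 = 0 \<and> A$3$1 = 0 \<and> A$3$2 = 0}"

definition Pb_plus :: "mat3 set" where
  "Pb_plus = {A \<in> Pb. A$1$1 > 0 \<and> A$2$2 > 0 \<and> A$3$3 > 0}"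

definition P1 :: "mat3 set" where
  "P1 = {A \<in> SL3R. A$3$1 = 0 \<and> A$3$2 = 0}"

definition P1_plus :: "mat3 set" where
  "P1_plus = {A \<in> P1. A$3$3 > 0}"

definition P2 :: "mat3 set" where
  "P2 = {A \<in> SL3R. A$2$1 = 0 \<and> A$3$1 = 0}"

definition P2_plus :: "mat3 set" where
  "P2_plus = {A \<in> P2. A$1$1 > 0}"

definition H3Z :: "mat3 set" where
  "H3Z = SL3Z \<inter> U3"

definition Eu :: "3 \<Rightarrow> 3 \<Rightarrow> mat3" where
  "Eu i j = (\<chi> k l. if k = i \<and> l = j then 1 else 0)"

definition Gamma1 :: "mat3 set" where
  "Gamma1 = {mat 1 + of_int a *\<^sub>R Eu 1 3 + of_int b *\<^sub>R Eu 2 3 | a b :: int. True}"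

definition Gamma2 :: "mat3 set" where
  "Gamma2 = {mat 1 + of_int a *\<^sub>R Eu 1 2 + of_int b *\<^sub>R Eu 1 3 | a b :: int. True}"

definition setmul :: "mat3 set \<Rightarrow> mat3 set \<Rightarrow> mat3 set" where
  "setmul A B = {a ** b | a b. a \<in> A \<and> b \<in> B}"

definition cosetU :: "mat3 \<Rightarrow> mat3 set" where
  "cosetU g = (\<lambda>u. g ** u) ` U3"

definition stabGamma :: "mat3 \<Rightarrow> mat3 set" where
  "stabGamma g = {\<gamma> \<in> SL3Z. (\<lambda>x. \<gamma> ** x) ` cosetU g = cosetU g}"

end

theory Submission
  imports Defs
begin


lemma mm3: "((A::mat3) ** B)$i$j = A$i$1*B$1$j + A$i$2*B$2$j + A$i$3*B$3$j"
  by (simp add: matrix_matrix_mult_def sum_3)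
lemma mv3: "((A::mat3) *v w)$i = A$i$1*w$1 + A$i$2*w$2 + A$i$3*w$3"
  by (simp add: matrix_vector_mult_def sum_3)
lemma in3: "(x::real^3) \<bullet> y = x$1*y$1 + x$2*y$2 + x$3*y$3"
  by (simp add: inner_vec_def sum_3)
lemma mat1e: "(mat 1::mat3) $ i $ j = (if i = j then 1 else 0)"
  by (simp add: mat_def)
lemma mat3_eq: "(A::mat3) = B \<longleftrightarrow> (A$1$1 = B$1$1 \<and> A$1$2 = B$1$2 \<and> A$1$3 = B$1$3 \<and>
   A$2$1 = B$2$1 \<and> A$2$2 = B$2$2 \<and> A$2$3 = B$2$3 \<and> A$3$1 = B$3$1 \<and> A$3$2 = B$3$2 \<and> A$3$3 = B$3$3)"
  by (auto simp add: vec_eq_iff forall_3)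

definition M3 :: "real \<Rightarrow> real \<Rightarrow> real \<Rightarrow> real \<Rightarrow> real \<Rightarrow> real \<Rightarrow> real \<Rightarrow> real \<Rightarrow> real \<Rightarrow> mat3" where
  "M3 a b c d e f g h i = vector [vector [a,b,c], vector [d,e,f], vector [g,h,i]]"

lemma M3e[simp]: "M3 a b c d e f g h i $1$1 = a" "M3 a b c d e f g h i $1$2 = b" "M3 a b c d e f g h i $1$3 = c"
  "M3 a b c d e f g h i $2$1 = d" "M3 a b c d e f g h i $2$2 = e" "M3 a b c d e f g h i $2$3 = f"
  "M3 a b c d e f g h i $3$1 = g" "M3 a b c d e f g h i $3$2 = h" "M3 a b c d e f g h i $3$3 = i"
  by (simp_all add: M3_def)

lemma mat1_U3: "mat 1 \<in> U3" by (simp add: U3_def mat1e)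

lemma U3_mul: "u \<in> U3 \<Longrightarrow> v \<in> U3 \<Longrightarrow> u ** v \<in> U3"
  by (simp add: U3_def mm3)

lemma U3_inv: assumes "u \<in> U3" shows "\<exists>v\<in>U3. u ** v = mat 1"
proof -
  let ?v = "M3 1 (- u$1$2) (u$1$2*u$2$3 - u$1$3) 0 1 (- u$2$3) 0 0 1"
  have "?v \<in> U3" by (simp add: U3_def)
  moreover have "u ** ?v = mat 1" using assms
    by (simp add: U3_def mat3_eq mm3 mat1e algebra_simps)
  ultimately show ?thesis by blast
qed

lemma U3_image: assumes "u \<in> U3" shows "(\<lambda>x. u ** x) ` U3 = U3"
proof
  show "(\<lambda>x. u ** x) ` U3 \<subseteq> U3" using assms U3_mul by auto
  show "U3 \<subseteq> (\<lambda>x. u ** x) ` U3"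
  proof
    fix y assume y: "y \<in> U3"
    obtain v where v: "v \<in> U3" "u ** v = mat 1" using U3_inv assms by blast
    have "y = u ** (v ** y)" by (simp add: matrix_mul_assoc v)
    moreover have "v ** y \<in> U3" using U3_mul v y by blast
    ultimately show "y \<in> (\<lambda>x. u ** x) ` U3" by blast
  qed
qed

lemma stab_char: "stabGamma g = {\<gamma> \<in> SL3Z. \<exists>u\<in>U3. \<gamma> ** g = g ** u}"
proof -
  have "((\<lambda>x. \<gamma> ** x) ` cosetU g = cosetU g) \<longleftrightarrow> (\<exists>u\<in>U3. \<gamma> ** g = g ** u)" for \<gamma>
  proof
    assume h: "(\<lambda>x. \<gamma> ** x) ` cosetU g = cosetU g"
    have "\<gamma> ** (g ** mat 1) \<in> (\<lambda>x. \<gamma> ** x) ` cosetU g"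
      unfolding cosetU_def using mat1_U3 by blast
    then have "\<gamma> ** g \<in> cosetU g" using h by simp
    then show "\<exists>u\<in>U3. \<gamma> ** g = g ** u" unfolding cosetU_def by blast
  next
    assume "\<exists>u\<in>U3. \<gamma> ** g = g ** u"
    then obtain u where u: "u \<in> U3" "\<gamma> ** g = g ** u" by blast
    have "(\<lambda>x. \<gamma> ** x) ` cosetU g = (\<lambda>x. g ** (u ** x)) ` U3"
      unfolding cosetU_def image_image
      by (rule image_cong) (simp_all add: matrix_mul_assoc u(2))
    also have "\<dots> = (\<lambda>x. g ** x) ` ((\<lambda>x. u ** x) ` U3)" by (simp add: image_image)
    also have "\<dots> = cosetU g" by (simp add: U3_image u(1) cosetU_def)
    finally show "(\<lambda>x. \<gamma> ** x) ` cosetU g = cosetU g" .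
  qed
  then show ?thesis unfolding stabGamma_def by blast
qed

lemma SL3Z_mul: "A \<in> SL3Z \<Longrightarrow> B \<in> SL3Z \<Longrightarrow> A ** B \<in> SL3Z"
  by (simp add: SL3Z_def SL3R_def det_mul mm3 Ints_add Ints_mult)

definition adjM :: "mat3 \<Rightarrow> mat3" where
  "adjM A = M3 (A$2$2*A$3$3 - A$2$3*A$3$2) (A$1$3*A$3$2 - A$1$2*A$3$3) (A$1$2*A$2$3 - A$1$3*A$2$2)
                (A$2$3*A$3$1 - A$2$1*A$3$3) (A$1$1*A$3$3 - A$1$3*A$3$1) (A$1$3*A$2$1 - A$1$1*A$2$3)
                (A$2$1*A$3$2 - A$2$2*A$3$1) (A$1$2*A$3$1 - A$1$1*A$3$2) (A$1$1*A$2$2 - A$1$2*A$2$1)"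

lemma adjL: "adjM A ** A = (\<chi> i j. if i = j then det A else 0)"
  unfolding mat3_eq mm3 det_3 adjM_def M3e by simp algebra

lemma adjR: "A ** adjM A = (\<chi> i j. if i = j then det A else 0)"
  unfolding mat3_eq mm3 det_3 adjM_def M3e by simp algebra

lemma SL3Z_inv: assumes "A \<in> SL3Z" shows "\<exists>B\<in>SL3Z. B ** A = mat 1 \<and> A ** B = mat 1"
proof -
  have d: "det A = 1" using assms by (simp add: SL3Z_def SL3R_def)
  have 1: "adjM A ** A = mat 1" unfolding adjL d by (simp add: mat_def)
  have 2: "A ** adjM A = mat 1" unfolding adjR d by (simp add: mat_def)
  have "det (adjM A) = 1"
  proof -
    have "det (adjM A) * det A = 1" using 1 by (metis det_mul det_I)
    then show ?thesis using d by simp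
  qed
  moreover have "\<forall>i j. adjM A $ i $ j \<in> \<int>" using assms unfolding SL3Z_def adjM_def
    by (auto simp: forall_3 Ints_diff Ints_mult)
  ultimately show ?thesis using 1 2 by (auto simp: SL3Z_def SL3R_def)
qed

lemma setmul_I: assumes "M \<in> SL3Z" "M ** g \<in> P" shows "g \<in> setmul SL3Z P"
proof -
  obtain B where B: "B \<in> SL3Z" "B ** M = mat 1" using SL3Z_inv assms(1) by blast
  have "g = B ** (M ** g)" by (simp add: matrix_mul_assoc B(2))
  then show ?thesis unfolding setmul_def using B(1) assms(2) by blast
qed


lemma L2: assumes "p \<in> \<int>" "q \<in> \<int>"
  shows "\<exists>a b c d. a\<in>\<int> \<and> b\<in>\<int> \<and> c\<in>\<int> \<and> d\<in>\<int> \<and> a*d - b*c = (1::real) \<and> c*p + d*q = 0"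
proof -
  obtain ip iq where pq: "p = of_int ip" "q = of_int iq" using assms by (metis Ints_cases)
  show ?thesis
  proof (cases "ip = 0 \<and> iq = 0")
    case True
    then show ?thesis using pq by (intro exI[of _ 1] exI[of _ 0] exI[of _ 0] exI[of _ 1]) auto
  next
    case False
    define gd where "gd = gcd ip iq"
    have gd0: "gd \<noteq> 0" using False gd_def by simp
    obtain p' where p': "ip = gd * p'" using gd_def by (metis gcd_dvd1 dvdE)
    obtain q' where q': "iq = gd * q'" using gd_def by (metis gcd_dvd2 dvdE)
    obtain s t where st: "s * ip + t * iq = gd" using bezout_int gd_def by metis
    have "gd * (s * p' + t * q') = gd * 1" using st p' q' by (simp add: algebra_simps)
    then have st1: "s * p' + t * q' = 1" using gd0 by (metis mult_left_cancel)
    have e1: "real_of_int s * of_int p' - of_int t * (- of_int q') = 1"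
      using st1 by (metis (mono_tags, opaque_lifting) diff_minus_eq_add minus_mult_right of_int_1 of_int_add of_int_mult)
    have e2: "(- real_of_int q') * p + of_int p' * q = 0" using pq p' q' by (simp add: algebra_simps)
    show ?thesis
      apply (rule exI[of _ "of_int s"], rule exI[of _ "of_int t"], rule exI[of _ "- of_int q'"], rule exI[of _ "of_int p'"])
      by (intro conjI Ints_of_int Ints_minus e1 e2)
  qed
qed

lemma L2': assumes "n1 \<in> \<int>" "n2 \<in> \<int>" "n1 \<noteq> 0 \<or> n2 \<noteq> 0" "n1 * x + n2 * y = (0::real)"
  shows "\<exists>a b c d. a\<in>\<int> \<and> b\<in>\<int> \<and> c\<in>\<int> \<and> d\<in>\<int> \<and> a*d - b*c = (1::real) \<and> c*x + d*y = 0"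
proof -
  obtain a b c d where abcd: "a\<in>\<int>" "b\<in>\<int>" "c\<in>\<int>" "d\<in>\<int>" "a*d - b*c = (1::real)" "c*n2 + d*(-n1) = 0"
    using L2[of n2 "-n1"] assms by (auto simp: Ints_minus)
  have "c*x + d*y = 0"
  proof (cases "n1 = 0")
    case False
    have "n1 * (c*x + d*y) = c * (n1 * x + n2 * y)" using abcd(6) by (simp add: algebra_simps)
    then show ?thesis using False assms(4) by simp
  next
    case True
    then have n2: "n2 \<noteq> 0" using assms(3) by simp
    have "n2 * (c*x + d*y) = d * (n1 * x + n2 * y)" using abcd(6) by (simp add: algebra_simps)
    then show ?thesis using n2 assms(4) by simp
  qed
  then show ?thesis using abcd by blast
qed

lemma COL: assumes "\<forall>i. w$i \<in> \<int>" shows "\<exists>K\<in>SL3Z. (K *v w)$2 = 0 \<and> (K *v w)$3 = 0"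
proof -
  obtain a b c d where abcd: "a\<in>\<int>" "b\<in>\<int>" "c\<in>\<int>" "d\<in>\<int>" "a*d - b*c = (1::real)" "c*w$2 + d*w$3 = 0"
    using L2[of "w$2" "w$3"] assms by blast
  have "a*w$2 + b*w$3 \<in> \<int>" using assms abcd by (simp add: Ints_add Ints_mult)
  then obtain a' b' c' d' where abcd': "a'\<in>\<int>" "b'\<in>\<int>" "c'\<in>\<int>" "d'\<in>\<int>" "a'*d' - b'*c' = (1::real)"
       "c'*w$1 + d'*(a*w$2 + b*w$3) = 0"
    using L2[of "w$1" "a*w$2 + b*w$3"] assms by blast
  define K where "K = M3 a' (b'*a) (b'*b) c' (d'*a) (d'*b) 0 c d"
  have "det K = (a'*d' - b'*c') * (a*d - b*c)" unfolding K_def det_3 M3e by algebra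
  then have "det K = 1" using abcd abcd' by simp
  moreover have "\<forall>i j. K$i$j \<in> \<int>" using abcd abcd' unfolding K_def
    by (auto simp: forall_3 Ints_mult)
  ultimately have "K \<in> SL3Z" by (simp add: SL3Z_def SL3R_def)
  moreover have "(K *v w)$2 = 0" using abcd'(6) unfolding K_def mv3 M3e by (simp add: algebra_simps)
  moreover have "(K *v w)$3 = 0" using abcd(6) unfolding K_def mv3 M3e by (simp add: algebra_simps)
  ultimately show ?thesis by blast
qed

lemma ROW: assumes "\<forall>i. n$i \<in> \<int>" "n \<noteq> 0"
  shows "\<exists>M\<in>SL3Z. \<exists>x. x \<noteq> 0 \<and> (\<forall>k. n$k = x * M$3$k)"
proof -
  obtain K where K: "K \<in> SL3Z" "(K *v n)$2 = 0" "(K *v n)$3 = 0" using COL assms(1) by blast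
  obtain B where B: "B \<in> SL3Z" "B ** K = mat 1" using SL3Z_inv K(1) by blast
  have "n = B *v (K *v n)" by (simp add: matrix_vector_mul_assoc B(2))
  then have nk: "n$k = B$k$1 * (K *v n)$1" for k using K(2,3) by (metis mv3 add.right_neutral mult_zero_right)
  define x where "x = (K *v n)$1"
  have "x \<noteq> 0"
  proof
    assume "x = 0"
    then have "n = 0" using nk x_def by (simp add: vec_eq_iff)
    then show False using assms(2) by simp
  qed
  define M where "M = M3 (B$1$2) (B$2$2) (B$3$2) (B$1$3) (B$2$3) (B$3$3) (B$1$1) (B$2$1) (B$3$1)"
  have "det M = det B" unfolding M_def det_3 M3e by algebra
  then have "det M = 1" using B(1) by (simp add: SL3Z_def SL3R_def)
  moreover have "\<forall>i j. M$i$j \<in> \<int>" using B(1) unfolding M_def SL3Z_def by (auto simp: forall_3)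
  ultimately have "M \<in> SL3Z" by (simp add: SL3Z_def SL3R_def)
  moreover have "\<forall>k. n$k = x * M$3$k" using nk x_def unfolding M_def by (auto simp: forall_3)
  ultimately show ?thesis using \<open>x \<noteq> 0\<close> by blast
qed


lemma triR: assumes g: "g$2$1 = 0" "g$3$1 = 0" "g$3$2 = 0" "g$1$1 \<noteq> 0" "g$2$2 \<noteq> 0" "g$3$3 \<noteq> 0"
  and u: "u \<in> U3" and eq: "\<gamma> ** g = g ** u"
  shows "\<gamma> \<in> U3"
proof -
  have E: "(\<gamma> ** g)$i$j = (g ** u)$i$j" for i j using eq by simp
  have uz: "u$1$1 = 1" "u$2$2 = 1" "u$3$3 = 1" "u$2$1 = 0" "u$3$1 = 0" "u$3$2 = 0" using u by (auto simp: U3_def)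
  have "\<gamma>$1$1 * g$1$1 = g$1$1" using E[of 1 1] g uz by (simp add: mm3)
  then have 11: "\<gamma>$1$1 = 1" using g by simp
  have "\<gamma>$2$1 * g$1$1 = 0" using E[of 2 1] g uz by (simp add: mm3)
  then have 21: "\<gamma>$2$1 = 0" using g by simp
  have "\<gamma>$3$1 * g$1$1 = 0" using E[of 3 1] g uz by (simp add: mm3)
  then have 31: "\<gamma>$3$1 = 0" using g by simp
  have "\<gamma>$3$2 * g$2$2 = 0" using E[of 3 2] g uz 31 by (simp add: mm3)
  then have 32: "\<gamma>$3$2 = 0" using g by simp
  have "\<gamma>$2$2 * g$2$2 = g$2$2" using E[of 2 2] g uz 21 by (simp add: mm3)
  then have 22: "\<gamma>$2$2 = 1" using g by simp
  have "\<gamma>$3$3 * g$3$3 = g$3$3" using E[of 3 3] g uz 31 32 by (simp add: mm3)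
  then have 33: "\<gamma>$3$3 = 1" using g by simp
  show ?thesis using 11 21 31 32 22 33 by (simp add: U3_def)
qed

lemma triL: assumes g: "g$2$1 = 0" "g$3$1 = 0" "g$3$2 = 0" "g$1$1 \<noteq> 0" "g$2$2 \<noteq> 0" "g$3$3 \<noteq> 0"
  and u: "\<gamma> \<in> U3" and eq: "\<gamma> ** g = g ** u"
  shows "u \<in> U3"
proof -
  have E: "(\<gamma> ** g)$i$j = (g ** u)$i$j" for i j using eq by simp
  have uz: "\<gamma>$1$1 = 1" "\<gamma>$2$2 = 1" "\<gamma>$3$3 = 1" "\<gamma>$2$1 = 0" "\<gamma>$3$1 = 0" "\<gamma>$3$2 = 0" using u by (auto simp: U3_def)
  have "g$3$3 * u$3$1 = 0" using E[of 3 1] g uz by (simp add: mm3)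
  then have 31: "u$3$1 = 0" using g by simp
  have "g$3$3 * u$3$2 = 0" using E[of 3 2] g uz by (simp add: mm3)
  then have 32: "u$3$2 = 0" using g by simp
  have "g$3$3 * u$3$3 = g$3$3" using E[of 3 3] g uz by (simp add: mm3)
  then have 33: "u$3$3 = 1" using g by simp
  have "g$2$2 * u$2$1 = 0" using E[of 2 1] g uz 31 by (simp add: mm3)
  then have 21: "u$2$1 = 0" using g by simp
  have "g$2$2 * u$2$2 = g$2$2" using E[of 2 2] g uz 32 by (simp add: mm3)
  then have 22: "u$2$2 = 1" using g by simp
  have "g$1$1 * u$1$1 = g$1$1" using E[of 1 1] g uz 21 31 by (simp add: mm3)
  then have 11: "u$1$1 = 1" using g by simp
  show ?thesis using 11 21 31 32 22 33 by (simp add: U3_def)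
qed

lemma inv_exists: fixes g \<gamma> :: mat3 assumes "det g = 1" shows "\<exists>u. g ** u = \<gamma> ** g"
proof -
  have "g ** adjM g = mat 1" unfolding adjR assms by (simp add: mat_def)
  then have "g ** (adjM g ** (\<gamma> ** g)) = \<gamma> ** g" by (simp add: matrix_mul_assoc)
  then show ?thesis by blast
qed

lemma part1: assumes "g \<in> Pb_plus" shows "stabGamma g = H3Z"
proof -
  have g: "g$2$1 = 0" "g$3$1 = 0" "g$3$2 = 0" and d: "det g = 1" using assms by (auto simp: Pb_plus_def Pb_def SL3R_def)
  have "g$1$1 * g$2$2 * g$3$3 = 1" using d g by (simp add: det_3)
  then have nz: "g$1$1 \<noteq> 0" "g$2$2 \<noteq> 0" "g$3$3 \<noteq> 0" by auto
  show ?thesis unfolding stab_char H3Z_def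
  proof (intro set_eqI iffI)
    fix \<gamma> assume "\<gamma> \<in> {\<gamma> \<in> SL3Z. \<exists>u\<in>U3. \<gamma> ** g = g ** u}"
    then show "\<gamma> \<in> SL3Z \<inter> U3" using triR[OF g nz] by blast
  next
    fix \<gamma> assume h: "\<gamma> \<in> SL3Z \<inter> U3"
    obtain u where u: "g ** u = \<gamma> ** g" using inv_exists d by blast
    have "\<gamma> \<in> U3" using h by blast
    then have "u \<in> U3" using triL[OF g nz] u by metis
    then show "\<gamma> \<in> {\<gamma> \<in> SL3Z. \<exists>u\<in>U3. \<gamma> ** g = g ** u}" using h u by (metis (mono_tags, lifting) IntD1 mem_Collect_eq)
  qed
qed



lemma blk12: assumes "a\<in>\<int>" "b\<in>\<int>" "c\<in>\<int>" "d\<in>\<int>" "a*d - b*c = 1"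
  shows "M3 a b 0 c d 0 0 0 1 \<in> SL3Z"
  using assms by (auto simp: SL3Z_def SL3R_def det_3 forall_3)

lemma blk23: assumes "a\<in>\<int>" "b\<in>\<int>" "c\<in>\<int>" "d\<in>\<int>" "a*d - b*c = 1"
  shows "M3 1 0 0 0 a b 0 c d \<in> SL3Z"
  using assms by (auto simp: SL3Z_def SL3R_def det_3 forall_3)

lemma Eu_e: "Eu i j $ k $ l = (if k = i \<and> l = j then 1 else 0)" by (simp add: Eu_def)

lemma Gamma1_char: "Gamma1 = {M3 1 0 (of_int a) 0 1 (of_int b) 0 0 1 | a b. True}"
  unfolding Gamma1_def by (auto simp: mat3_eq Eu_e mat1e)

lemma Gamma2_char: "Gamma2 = {M3 1 (of_int a) (of_int b) 0 1 0 0 0 1 | a b. True}"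
  unfolding Gamma2_def by (auto simp: mat3_eq Eu_e mat1e)

lemma part2: assumes "g \<in> P1_plus - setmul SL3Z Pb" shows "stabGamma g = Gamma1"
proof -
  have g: "g$3$1 = 0" "g$3$2 = 0" and d: "det g = 1" and ns: "g \<notin> setmul SL3Z Pb"
    using assms by (auto simp: P1_plus_def P1_def SL3R_def)
  have dA: "g$3$3 * (g$1$1*g$2$2 - g$1$2*g$2$1) = 1" using d g by (simp add: det_3 algebra_simps)
  then have nz: "g$3$3 \<noteq> 0" "g$1$1*g$2$2 - g$1$2*g$2$1 \<noteq> 0" by auto
  show ?thesis unfolding stab_char
  proof (intro set_eqI iffI)
    fix \<gamma> assume "\<gamma> \<in> {\<gamma> \<in> SL3Z. \<exists>u\<in>U3. \<gamma> ** g = g ** u}"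
    then obtain u where gz: "\<gamma> \<in> SL3Z" and u: "u \<in> U3" and eq: "\<gamma> ** g = g ** u" by blast
    have E: "(\<gamma> ** g)$i$j = (g ** u)$i$j" for i j using eq by simp
    have uz: "u$1$1 = 1" "u$2$2 = 1" "u$3$3 = 1" "u$2$1 = 0" "u$3$1 = 0" "u$3$2 = 0" using u by (auto simp: U3_def)
    have E31: "\<gamma>$3$1 * g$1$1 + \<gamma>$3$2 * g$2$1 = 0" using E[of 3 1] g uz by (simp add: mm3)
    have E32: "\<gamma>$3$1 * g$1$2 + \<gamma>$3$2 * g$2$2 = 0" using E[of 3 2] g uz by (simp add: mm3)
    have "\<gamma>$3$1 * (g$1$1*g$2$2 - g$1$2*g$2$1) = g$2$2 * (\<gamma>$3$1 * g$1$1 + \<gamma>$3$2 * g$2$1) - g$2$1 * (\<gamma>$3$1 * g$1$2 + \<gamma>$3$2 * g$2$2)"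
      by (simp add: algebra_simps)
    then have 31: "\<gamma>$3$1 = 0" using E31 E32 nz by simp
    have "\<gamma>$3$2 * (g$1$1*g$2$2 - g$1$2*g$2$1) = g$1$1 * (\<gamma>$3$1 * g$1$2 + \<gamma>$3$2 * g$2$2) - g$1$2 * (\<gamma>$3$1 * g$1$1 + \<gamma>$3$2 * g$2$1)"
      by (simp add: algebra_simps)
    then have 32: "\<gamma>$3$2 = 0" using E31 E32 nz by simp
    have "\<gamma>$3$3 * g$3$3 = g$3$3" using E[of 3 3] g uz 31 32 by (simp add: mm3)
    then have 33: "\<gamma>$3$3 = 1" using nz by simp
    have E11: "(\<gamma>$1$1 - 1) * g$1$1 + \<gamma>$1$2 * g$2$1 = 0" using E[of 1 1] g uz by (simp add: mm3 algebra_simps)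
    have E21: "\<gamma>$2$1 * g$1$1 + (\<gamma>$2$2 - 1) * g$2$1 = 0" using E[of 2 1] g uz by (simp add: mm3 algebra_simps)
    have int: "\<gamma>$i$j \<in> \<int>" for i j using gz by (simp add: SL3Z_def)
    show "\<gamma> \<in> Gamma1"
    proof (cases "\<gamma>$1$1 = 1 \<and> \<gamma>$1$2 = 0 \<and> \<gamma>$2$1 = 0 \<and> \<gamma>$2$2 = 1")
      case True
      obtain a where a: "\<gamma>$1$3 = of_int a" using int by (metis Ints_cases)
      obtain b where b: "\<gamma>$2$3 = of_int b" using int by (metis Ints_cases)
      have "\<gamma> = M3 1 0 (of_int a) 0 1 (of_int b) 0 0 1" using True a b 31 32 33 by (simp add: mat3_eq)
      then show ?thesis unfolding Gamma1_char by blast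
    next
      case False
      have "\<exists>n1 n2. n1 \<in> \<int> \<and> n2 \<in> \<int> \<and> (n1 \<noteq> 0 \<or> n2 \<noteq> 0) \<and> n1 * g$1$1 + n2 * g$2$1 = 0"
      proof (cases "\<gamma>$1$1 - 1 \<noteq> 0 \<or> \<gamma>$1$2 \<noteq> 0")
        case True show ?thesis apply (rule exI[of _ "\<gamma>$1$1 - 1"], rule exI[of _ "\<gamma>$1$2"]) using True E11 int by (auto simp: Ints_diff)
      next
        case False2: False
        have nn: "\<gamma>$2$1 \<noteq> 0 \<or> \<gamma>$2$2 - 1 \<noteq> 0" using False False2 by auto
        show ?thesis apply (rule exI[of _ "\<gamma>$2$1"], rule exI[of _ "\<gamma>$2$2 - 1"]) using nn E21 int by (auto simp: Ints_diff)
      qed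
      then obtain n1 n2 where nn: "n1 \<in> \<int>" "n2 \<in> \<int>" "n1 \<noteq> 0 \<or> n2 \<noteq> 0" "n1 * g$1$1 + n2 * g$2$1 = 0" by blast
      obtain a b c e where abce: "a\<in>\<int>" "b\<in>\<int>" "c\<in>\<int>" "e\<in>\<int>" "a*e - b*c = 1" "c*g$1$1 + e*g$2$1 = 0"
        using L2'[OF nn] by blast
      let ?M = "M3 a b 0 c e 0 0 0 1"
      have M: "?M \<in> SL3Z" using blk12 abce by blast
      have "det (?M ** g) = 1" using M d by (simp add: det_mul SL3Z_def SL3R_def)
      moreover have "(?M ** g)$2$1 = 0" "(?M ** g)$3$1 = 0" "(?M ** g)$3$2 = 0" using abce g by (simp_all add: mm3)
      ultimately have "?M ** g \<in> Pb" by (simp add: Pb_def SL3R_def)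
      then have "g \<in> setmul SL3Z Pb" using setmul_I M by blast
      then show ?thesis using ns by blast
    qed
  next
    fix \<gamma> assume "\<gamma> \<in> Gamma1"
    then obtain a b where \<gamma>: "\<gamma> = M3 1 0 (of_int a) 0 1 (of_int b) 0 0 1" unfolding Gamma1_char by blast
    have "\<gamma> \<in> SL3Z" unfolding \<gamma> by (auto simp: SL3Z_def SL3R_def det_3 forall_3)
    moreover
    define u where "u = M3 1 0 (g$3$3*g$3$3*(g$2$2* of_int a - g$1$2* of_int b)) 0 1 (g$3$3*g$3$3*(g$1$1* of_int b - g$2$1* of_int a)) 0 0 1"
    have "u \<in> U3" by (simp add: u_def U3_def)
    moreover have "\<gamma> ** g = g ** u"
    proof -
      have e1: "g$1$1 * (g$3$3*g$3$3*(g$2$2* of_int a - g$1$2* of_int b)) + g$1$2 * (g$3$3*g$3$3*(g$1$1* of_int b - g$2$1* of_int a))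
          = g$3$3 * of_int a * (g$3$3 * (g$1$1*g$2$2 - g$1$2*g$2$1))" by (simp add: algebra_simps)
      have e2: "g$2$1 * (g$3$3*g$3$3*(g$2$2* of_int a - g$1$2* of_int b)) + g$2$2 * (g$3$3*g$3$3*(g$1$1* of_int b - g$2$1* of_int a))
          = g$3$3 * of_int b * (g$3$3 * (g$1$1*g$2$2 - g$1$2*g$2$1))" by (simp add: algebra_simps)
      have e1': "g$1$1 * (g$3$3*g$3$3*(g$2$2* of_int a - g$1$2* of_int b)) + g$1$2 * (g$3$3*g$3$3*(g$1$1* of_int b - g$2$1* of_int a))
          = g$3$3 * of_int a" using e1 dA by simp
      have e2': "g$2$1 * (g$3$3*g$3$3*(g$2$2* of_int a - g$1$2* of_int b)) + g$2$2 * (g$3$3*g$3$3*(g$1$1* of_int b - g$2$1* of_int a))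
          = g$3$3 * of_int b" using e2 dA by simp
      show ?thesis unfolding mat3_eq mm3 \<gamma> u_def M3e g apply (intro conjI) using e1' e2' by (simp_all add: algebra_simps)
    qed
    ultimately show "\<gamma> \<in> {\<gamma> \<in> SL3Z. \<exists>u\<in>U3. \<gamma> ** g = g ** u}" by blast
  qed
qed


lemma part3: assumes "g \<in> P2_plus - setmul SL3Z Pb" shows "stabGamma g = Gamma2"
proof -
  have g: "g$2$1 = 0" "g$3$1 = 0" and d: "det g = 1" and ns: "g \<notin> setmul SL3Z Pb"
    using assms by (auto simp: P2_plus_def P2_def SL3R_def)
  have dA: "g$1$1 * (g$2$2*g$3$3 - g$2$3*g$3$2) = 1" using d g by (simp add: det_3 algebra_simps)
  then have nz: "g$1$1 \<noteq> 0" by auto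
  show ?thesis unfolding stab_char
  proof (intro set_eqI iffI)
    fix \<gamma> assume "\<gamma> \<in> {\<gamma> \<in> SL3Z. \<exists>u\<in>U3. \<gamma> ** g = g ** u}"
    then obtain u where gz: "\<gamma> \<in> SL3Z" and u: "u \<in> U3" and eq: "\<gamma> ** g = g ** u" by blast
    have E: "(\<gamma> ** g)$i$j = (g ** u)$i$j" for i j using eq by simp
    have uz: "u$1$1 = 1" "u$2$2 = 1" "u$3$3 = 1" "u$2$1 = 0" "u$3$1 = 0" "u$3$2 = 0" using u by (auto simp: U3_def)
    have "\<gamma>$1$1 * g$1$1 = g$1$1" using E[of 1 1] g uz by (simp add: mm3)
    then have 11: "\<gamma>$1$1 = 1" using nz by simp
    have "\<gamma>$2$1 * g$1$1 = 0" using E[of 2 1] g uz by (simp add: mm3)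
    then have 21: "\<gamma>$2$1 = 0" using nz by simp
    have "\<gamma>$3$1 * g$1$1 = 0" using E[of 3 1] g uz by (simp add: mm3)
    then have 31: "\<gamma>$3$1 = 0" using nz by simp
    have E22: "(\<gamma>$2$2 - 1) * g$2$2 + \<gamma>$2$3 * g$3$2 = 0" using E[of 2 2] g uz 21 by (simp add: mm3 algebra_simps)
    have E32: "\<gamma>$3$2 * g$2$2 + (\<gamma>$3$3 - 1) * g$3$2 = 0" using E[of 3 2] g uz 31 by (simp add: mm3 algebra_simps)
    have int: "\<gamma>$i$j \<in> \<int>" for i j using gz by (simp add: SL3Z_def)
    show "\<gamma> \<in> Gamma2"
    proof (cases "\<gamma>$2$2 = 1 \<and> \<gamma>$2$3 = 0 \<and> \<gamma>$3$2 = 0 \<and> \<gamma>$3$3 = 1")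
      case True
      obtain a where a: "\<gamma>$1$2 = of_int a" using int by (metis Ints_cases)
      obtain b where b: "\<gamma>$1$3 = of_int b" using int by (metis Ints_cases)
      have "\<gamma> = M3 1 (of_int a) (of_int b) 0 1 0 0 0 1" using True a b 11 21 31 by (simp add: mat3_eq)
      then show ?thesis unfolding Gamma2_char by blast
    next
      case False
      have "\<exists>n1 n2. n1 \<in> \<int> \<and> n2 \<in> \<int> \<and> (n1 \<noteq> 0 \<or> n2 \<noteq> 0) \<and> n1 * g$2$2 + n2 * g$3$2 = 0"
      proof (cases "\<gamma>$2$2 - 1 \<noteq> 0 \<or> \<gamma>$2$3 \<noteq> 0")
        case True show ?thesis apply (rule exI[of _ "\<gamma>$2$2 - 1"], rule exI[of _ "\<gamma>$2$3"]) using True E22 int by (auto simp: Ints_diff)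
      next
        case False2: False
        have nn: "\<gamma>$3$2 \<noteq> 0 \<or> \<gamma>$3$3 - 1 \<noteq> 0" using False False2 by auto
        show ?thesis apply (rule exI[of _ "\<gamma>$3$2"], rule exI[of _ "\<gamma>$3$3 - 1"]) using nn E32 int by (auto simp: Ints_diff)
      qed
      then obtain n1 n2 where nn: "n1 \<in> \<int>" "n2 \<in> \<int>" "n1 \<noteq> 0 \<or> n2 \<noteq> 0" "n1 * g$2$2 + n2 * g$3$2 = 0" by blast
      obtain a b c e where abce: "a\<in>\<int>" "b\<in>\<int>" "c\<in>\<int>" "e\<in>\<int>" "a*e - b*c = 1" "c*g$2$2 + e*g$3$2 = 0"
        using L2'[OF nn] by blast
      let ?M = "M3 1 0 0 0 a b 0 c e"
      have M: "?M \<in> SL3Z" using blk23 abce by blast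
      have "det (?M ** g) = 1" using M d by (simp add: det_mul SL3Z_def SL3R_def)
      moreover have "(?M ** g)$2$1 = 0" "(?M ** g)$3$1 = 0" "(?M ** g)$3$2 = 0" using abce g by (simp_all add: mm3)
      ultimately have "?M ** g \<in> Pb" by (simp add: Pb_def SL3R_def)
      then have "g \<in> setmul SL3Z Pb" using setmul_I M by blast
      then show ?thesis using ns by blast
    qed
  next
    fix \<gamma> assume "\<gamma> \<in> Gamma2"
    then obtain a b where \<gamma>: "\<gamma> = M3 1 (of_int a) (of_int b) 0 1 0 0 0 1" unfolding Gamma2_char by blast
    have "\<gamma> \<in> SL3Z" unfolding \<gamma> by (auto simp: SL3Z_def SL3R_def det_3 forall_3)
    moreover
    define u where "u = M3 1 ((of_int a * g$2$2 + of_int b * g$3$2) / g$1$1) ((of_int a * g$2$3 + of_int b * g$3$3) / g$1$1) 0 1 0 0 0 1"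
    have "u \<in> U3" by (simp add: u_def U3_def)
    moreover have "\<gamma> ** g = g ** u"
      unfolding mat3_eq mm3 \<gamma> u_def M3e g using nz by (simp add: field_simps)
    ultimately show "\<gamma> \<in> {\<gamma> \<in> SL3Z. \<exists>u\<in>U3. \<gamma> ** g = g ** u}" by blast
  qed
qed


lemma cross_perp: fixes v a b :: "real^3" assumes "v \<bullet> a = 0" "v \<bullet> b = 0" shows "cross3 v (cross3 a b) = 0"
proof -
  have "cross3 v (cross3 a b) = (v \<bullet> b) *\<^sub>R a - (v \<bullet> a) *\<^sub>R b"
    by (simp add: cross3_def vec_eq_iff forall_3 in3 algebra_simps)
  then show ?thesis using assms by simp
qed

lemma cross_comps: fixes v w :: "real^3" assumes "cross3 v w = 0"
  shows "v$2*w$3 = v$3*w$2" "v$3*w$1 = v$1*w$3" "v$1*w$2 = v$2*w$1"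
proof -
  have "(cross3 v w)$1 = 0" "(cross3 v w)$2 = 0" "(cross3 v w)$3 = 0" using assms by simp_all
  then show "v$2*w$3 = v$3*w$2" "v$3*w$1 = v$1*w$3" "v$1*w$2 = v$2*w$1" by (simp_all add: cross3_def)
qed

lemma lem_par: fixes k v w :: "real^3" assumes "k \<bullet> w = 0" "cross3 v w = 0" "w \<noteq> 0" shows "k \<bullet> v = 0"
proof -
  note c = cross_comps[OF assms(2)]
  obtain i where i: "w$i \<noteq> 0" using assms(3) by (metis vec_eq_iff zero_index)
  have "(k \<bullet> v) * w$i = v$i * (k \<bullet> w)"
  proof -
    consider "i = 1" | "i = 2" | "i = 3" using exhaust_3 by blast
    then show ?thesis
    proof cases
      case 1
      have "(k \<bullet> v) * w$1 - v$1 * (k \<bullet> w) = k$2*(v$2*w$1 - v$1*w$2) + k$3*(v$3*w$1 - v$1*w$3)"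
        by (simp add: in3 algebra_simps)
      then show ?thesis using c 1 by simp
    next
      case 2
      have "(k \<bullet> v) * w$2 - v$2 * (k \<bullet> w) = k$1*(v$1*w$2 - v$2*w$1) + k$3*(v$3*w$2 - v$2*w$3)"
        by (simp add: in3 algebra_simps)
      then show ?thesis using c 2 by simp
    next
      case 3
      have "(k \<bullet> v) * w$3 - v$3 * (k \<bullet> w) = k$1*(v$1*w$3 - v$3*w$1) + k$2*(v$2*w$3 - v$3*w$2)"
        by (simp add: in3 algebra_simps)
      then show ?thesis using c 3 by simp
    qed
  qed
  then show ?thesis using assms(1) i by simp
qed

lemma lem_rank1: fixes a b v :: "real^3" assumes "cross3 a b = 0" shows "a$k * (b \<bullet> v) = b$k * (a \<bullet> v)"
proof -
  note c = cross_comps[OF assms]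
  consider "k = 1" | "k = 2" | "k = 3" using exhaust_3 by blast
  then show ?thesis
  proof cases
    case 1
    have "a$1 * (b \<bullet> v) - b$1 * (a \<bullet> v) = v$2*(a$1*b$2 - a$2*b$1) - v$3*(a$3*b$1 - a$1*b$3)"
      by (simp add: in3 algebra_simps)
    then show ?thesis using c 1 by simp
  next
    case 2
    have "a$2 * (b \<bullet> v) - b$2 * (a \<bullet> v) = v$3*(a$2*b$3 - a$3*b$2) - v$1*(a$1*b$2 - a$2*b$1)"
      by (simp add: in3 algebra_simps)
    then show ?thesis using c 2 by simp
  next
    case 3
    have "a$3 * (b \<bullet> v) - b$3 * (a \<bullet> v) = v$1*(a$3*b$1 - a$1*b$3) - v$2*(a$2*b$3 - a$3*b$2)"
      by (simp add: in3 algebra_simps)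
    then show ?thesis using c 3 by simp
  qed
qed

lemma toP2: assumes d: "det g = 1" and w: "\<forall>i. w$i \<in> \<int>" "w \<noteq> 0" "cross3 (\<chi> i. g$i$1) w = 0"
  shows "g \<in> setmul SL3Z P2"
proof -
  obtain K where K: "K \<in> SL3Z" "(K *v w)$2 = 0" "(K *v w)$3 = 0" using COL w(1) by blast
  have "K$2 \<bullet> w = 0" "K$3 \<bullet> w = 0" using K by (simp_all add: mv3 in3)
  then have "K$2 \<bullet> (\<chi> i. g$i$1) = 0" "K$3 \<bullet> (\<chi> i. g$i$1) = 0" using lem_par w(2,3) by blast+
  then have z: "(K ** g)$2$1 = 0" "(K ** g)$3$1 = 0" by (simp_all add: mm3 in3)
  have "det (K ** g) = 1" using K d by (simp add: det_mul SL3Z_def SL3R_def)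
  then have "K ** g \<in> P2" using z by (simp add: P2_def SL3R_def)
  then show ?thesis using setmul_I K(1) by blast
qed

lemma toP1: assumes d: "det g = 1" and n: "\<forall>i. n$i \<in> \<int>" "n \<noteq> 0" "n \<bullet> (\<chi> i. g$i$1) = 0" "n \<bullet> (\<chi> i. g$i$2) = 0"
  shows "g \<in> setmul SL3Z P1"
proof -
  obtain M x where M: "M \<in> SL3Z" "x \<noteq> 0" "\<forall>k. n$k = x * M$3$k" using ROW n(1,2) by blast
  have "x * (M ** g)$3$1 = n \<bullet> (\<chi> i. g$i$1)" using M(3) by (simp add: mm3 in3 algebra_simps)
  then have z1: "(M ** g)$3$1 = 0" using n(3) M(2) by simp
  have "x * (M ** g)$3$2 = n \<bullet> (\<chi> i. g$i$2)" using M(3) by (simp add: mm3 in3 algebra_simps)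
  then have z2: "(M ** g)$3$2 = 0" using n(4) M(2) by simp
  have "det (M ** g) = 1" using M d by (simp add: det_mul SL3Z_def SL3R_def)
  then have "M ** g \<in> P1" using z1 z2 by (simp add: P1_def SL3R_def)
  then show ?thesis using setmul_I M(1) by blast
qed


lemma mat1_SL3Z: "mat 1 \<in> SL3Z"
  by (simp add: SL3Z_def SL3R_def mat1e)

lemma part4: assumes "g \<in> SL3R - (setmul SL3Z P1 \<union> setmul SL3Z P2)" shows "stabGamma g = {mat 1}"
proof -
  have d: "det g = 1" and n1: "g \<notin> setmul SL3Z P1" and n2: "g \<notin> setmul SL3Z P2"
    using assms by (auto simp: SL3R_def)
  show ?thesis unfolding stab_char
  proof (intro set_eqI iffI)
    fix \<gamma> assume "\<gamma> \<in> {\<gamma> \<in> SL3Z. \<exists>u\<in>U3. \<gamma> ** g = g ** u}"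
    then obtain u where gz: "\<gamma> \<in> SL3Z" and u: "u \<in> U3" and eq: "\<gamma> ** g = g ** u" by blast
    have E: "(\<gamma> ** g)$i$j = (g ** u)$i$j" for i j using eq by simp
    have uz: "u$1$1 = 1" "u$2$2 = 1" "u$3$3 = 1" "u$2$1 = 0" "u$3$1 = 0" "u$3$2 = 0" using u by (auto simp: U3_def)
    define N where "N = \<gamma> - mat 1"
    define v1 where "v1 = (\<chi> i. g$i$1)"
    define v2 where "v2 = (\<chi> i. g$i$2)"
    have F1: "N$i \<bullet> v1 = 0" for i
    proof -
      have "N$i \<bullet> v1 = (\<gamma> ** g)$i$1 - g$i$1" unfolding N_def v1_def
        using exhaust_3[of i] by (auto simp: in3 mm3 mat1e algebra_simps)
      also have "\<dots> = 0" using E[of i 1] uz by (simp add: mm3)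
      finally show ?thesis .
    qed
    have F2: "N$i \<bullet> v2 = u$1$2 * v1$i" for i
    proof -
      have "N$i \<bullet> v2 = (\<gamma> ** g)$i$2 - g$i$2" unfolding N_def v2_def
        using exhaust_3[of i] by (auto simp: in3 mm3 mat1e algebra_simps)
      also have "\<dots> = u$1$2 * v1$i" using E[of i 2] uz by (simp add: mm3 v1_def)
      finally show ?thesis .
    qed
    have Fint: "N$i$j \<in> \<int>" for i j using gz by (simp add: N_def SL3Z_def mat1e Ints_diff)
    show "\<gamma> \<in> {mat 1}"
    proof (rule ccontr)
      assume "\<gamma> \<notin> {mat 1}"
      then have Nnz: "N \<noteq> 0" by (simp add: N_def)
      show False
      proof (cases "\<exists>i j. cross3 (N$i) (N$j) \<noteq> 0")
        case True
        then obtain i j where ij: "cross3 (N$i) (N$j) \<noteq> 0" by blast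
        have "\<forall>k. cross3 (N$i) (N$j) $ k \<in> \<int>" unfolding forall_3
          by (simp add: cross3_def Fint Ints_diff Ints_mult)
        moreover have "cross3 (\<chi> i. g$i$1) (cross3 (N$i) (N$j)) = 0"
          using cross_perp F1 unfolding v1_def by (metis inner_commute)
        ultimately have "g \<in> setmul SL3Z P2" using toP2 d ij by blast
        then show False using n2 by blast
      next
        case False
        then have rk: "cross3 (N$i) (N$j) = 0" for i j by blast
        obtain m k where mk: "N$m$k \<noteq> 0" using Nnz by (metis vec_eq_iff zero_index)
        show False
        proof (cases "N$m \<bullet> v2 = 0")
          case True
          have "N$m \<noteq> 0" using mk by auto
          moreover have "\<forall>i. N$m$i \<in> \<int>" using Fint by blast
          ultimately have "g \<in> setmul SL3Z P1" using toP1[OF d] F1[of m] True unfolding v1_def v2_def by blast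
          then show False using n1 by blast
        next
          case False
          define w where "w = (\<chi> i. N$i$k)"
          have u12: "u$1$2 \<noteq> 0" using False F2[of m] by auto
          have wv: "v1$i = ((N$m \<bullet> v2) / (N$m$k * u$1$2)) * w$i" for i
          proof -
            have "N$i$k * (N$m \<bullet> v2) = N$m$k * (N$i \<bullet> v2)" using lem_rank1[OF rk[of i m]] by blast
            then have "N$i$k * (N$m \<bullet> v2) = N$m$k * u$1$2 * v1$i" using F2[of i] by simp
            then show ?thesis using mk u12 unfolding w_def by (simp add: field_simps)
          qed
          then have "v1 = ((N$m \<bullet> v2) / (N$m$k * u$1$2)) *\<^sub>R w" by (simp add: vec_eq_iff)
          then have "cross3 v1 w = 0" by (simp add: cross_mult_left)
          moreover have "w \<noteq> 0" using mk unfolding w_def by (metis vec_eq_iff vec_lambda_beta zero_index)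
          moreover have "\<forall>i. w$i \<in> \<int>" using Fint unfolding w_def by simp
          ultimately have "g \<in> setmul SL3Z P2" using toP2[OF d] unfolding v1_def by blast
          then show False using n2 by blast
        qed
      qed
    qed
  next
    fix \<gamma> :: mat3 assume "\<gamma> \<in> {mat 1}"
    then show "\<gamma> \<in> {\<gamma> \<in> SL3Z. \<exists>u\<in>U3. \<gamma> ** g = g ** u}" using mat1_SL3Z mat1_U3 by force
  qed
qed

theorem lemma5p17:
  shows "(\<forall>g \<in> Pb_plus. stabGamma g = H3Z)
       \<and> (\<forall>g \<in> P1_plus - setmul SL3Z Pb. stabGamma g = Gamma1)
       \<and> (\<forall>g \<in> P2_plus - setmul SL3Z Pb. stabGamma g = Gamma2)
       \<and> (\<forall>g \<in> SL3R - (setmul SL3Z P1 \<union> setmul SL3Z P2). stabGamma g = {mat 1})"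
  using part1 part2 part3 part4 by blast

end
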